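(* Let $m,n\ge1$. If there exists a KA$(m,n)$ and there exists a pair of orthogonal diagonal Latin squares of order $n$, then there exists an $m$-SCMS$(n)$.
   Context: $I_k=\{0,\dots,k-1\}$. A Kotzig array KA$(m,n)$ is an $m\times n$ array in which each row is a permutation of $\{0,1,\dots,n-1\}$ and all column sums are equal. A Latin square of order $n$ over an $n$-set $S$ is an $n\times n$ array each of whose rows and columns is a permutation of $S$; it is diagonal if its main diagonal $(a_{i,i})$ and back diagonal $(a_{i,n-1-i})$ are also permutations of $S$. Two Latin squares of order $n$ are orthogonal if, when superimposed, each ordered pair of symbols occurs exactly once. An MS$(n)$ is an $n\times n$ matrix with entries exactly $0,\dots,n^2-1$ whose row sums, column sums and two diagonal sums are all equal. $S_2(n)=\frac1n\sum_{k=0}^{n^2-1}k^2$. An $m$-SCMS$(n)$ is a list $B_0,\dots,B_{m-1}$ of (not necessarily distinct) MS$(n)$s, $B_s=(b^{(s)}_{i,j})$, such that $\sum_{s\in I_m}\sum_{j\in I_n}(b^{(s)}_{i,j})^{2}=mS_{2}(n)$ for every $i$, $\sum_{s\in I_m}\sum_{i\in I_n}(b^{(s)}_{i,j})^{2}=mS_{2}(n)$ for every $j$, $\sum_{s}\sum_{i}(b^{(s)}_{i,i})^{2}=mS_{2}(n)$, and $\sum_{s}\sum_{i}(b^{(s)}_{i,n-1-i})^{2}=mS_{2}(n)$. *)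

theory Defs
  imports Complex_Main
begin

text \<open>Arrays are represented as functions nat => nat => _, indexed by row i and column j,
  only meaningful for i < rows, j < cols. I_k = {0..<k}.\<close>

definition kotzig_array :: "nat \<Rightarrow> nat \<Rightarrow> (nat \<Rightarrow> nat \<Rightarrow> nat) \<Rightarrow> bool" where
  "kotzig_array m n A \<longleftrightarrow>
     (\<forall>i<m. bij_betw (\<lambda>j. A i j) {0..<n} {0..<n}) \<and>
     (\<forall>j<n. \<forall>j'<n. (\<Sum>i<m. A i j) = (\<Sum>i<m. A i j'))"

definition latin_square :: "nat \<Rightarrow> 'a set \<Rightarrow> (nat \<Rightarrow> nat \<Rightarrow> 'a) \<Rightarrow> bool" where
  "latin_square n S L \<longleftrightarrow> finite S \<and> card S = n \<and>
     (\<forall>i<n. bij_betw (\<lambda>j. L i j) {0..<n} S) \<and>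
     (\<forall>j<n. bij_betw (\<lambda>i. L i j) {0..<n} S)"

definition diagonal_latin_square :: "nat \<Rightarrow> 'a set \<Rightarrow> (nat \<Rightarrow> nat \<Rightarrow> 'a) \<Rightarrow> bool" where
  "diagonal_latin_square n S L \<longleftrightarrow> latin_square n S L \<and>
     bij_betw (\<lambda>i. L i i) {0..<n} S \<and>
     bij_betw (\<lambda>i. L i (n - 1 - i)) {0..<n} S"

definition orthogonal :: "nat \<Rightarrow> 'a set \<Rightarrow> 'b set \<Rightarrow> (nat \<Rightarrow> nat \<Rightarrow> 'a) \<Rightarrow> (nat \<Rightarrow> nat \<Rightarrow> 'b) \<Rightarrow> bool" where
  "orthogonal n S T L1 L2 \<longleftrightarrow>
     bij_betw (\<lambda>(i, j). (L1 i j, L2 i j)) ({0..<n} \<times> {0..<n}) (S \<times> T)"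

definition magic_square :: "nat \<Rightarrow> (nat \<Rightarrow> nat \<Rightarrow> nat) \<Rightarrow> bool" where
  "magic_square n B \<longleftrightarrow>
     bij_betw (\<lambda>(i, j). B i j) ({0..<n} \<times> {0..<n}) {0..<n^2} \<and>
     (\<exists>c. (\<forall>i<n. (\<Sum>j<n. B i j) = c) \<and> (\<forall>j<n. (\<Sum>i<n. B i j) = c) \<and>
          (\<Sum>i<n. B i i) = c \<and> (\<Sum>i<n. B i (n - 1 - i)) = c)"

definition S2 :: "nat \<Rightarrow> real" where
  "S2 n = (\<Sum>k<n^2. real (k^2)) / real n"

definition SCMS :: "nat \<Rightarrow> nat \<Rightarrow> (nat \<Rightarrow> nat \<Rightarrow> nat \<Rightarrow> nat) \<Rightarrow> bool" where
  "SCMS m n B \<longleftrightarrow>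
     (\<forall>s<m. magic_square n (B s)) \<and>
     (\<forall>i<n. (\<Sum>s<m. \<Sum>j<n. real ((B s i j)^2)) = real m * S2 n) \<and>
     (\<forall>j<n. (\<Sum>s<m. \<Sum>i<n. real ((B s i j)^2)) = real m * S2 n) \<and>
     (\<Sum>s<m. \<Sum>i<n. real ((B s i i)^2)) = real m * S2 n \<and>
     (\<Sum>s<m. \<Sum>i<n. real ((B s i (n - 1 - i))^2)) = real m * S2 n"

end

theory Submission
  imports Defs
begin

lemma pair_bij: "bij_betw (\<lambda>(u,v). n*u+v) ({..<n}\<times>{..<n}) {..<(n::nat)^2}"
proof -
  have inj: "inj_on (\<lambda>(u,v). n*u+v) ({..<n}\<times>{..<n})"
  proof (rule inj_onI, clarsimp)
    fix u v u' v' assume "v < n" "v' < n" "n*u+v = n*u'+v'"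
    then have "(n*u+v) mod n = (n*u'+v') mod n" "(n*u+v) div n = (n*u'+v') div n" by simp_all
    with \<open>v<n\<close> \<open>v'<n\<close> show "u = u' \<and> v = v'" by simp
  qed
  have "(\<lambda>(u,v). n*u+v) ` ({..<n}\<times>{..<n}) = {..<n^2}"
  proof (rule set_eqI, rule iffI)
    fix k assume "k \<in> (\<lambda>(u,v). n*u+v) ` ({..<n}\<times>{..<n})"
    then obtain u v where uv: "u<n" "v<n" "k = n*u+v" by auto
    have "n*u + v < n*u + n" using uv by simp
    also have "\<dots> = n*(u+1)" by simp
    also have "\<dots> \<le> n*n" using uv by (intro mult_le_mono2) simp
    finally show "k \<in> {..<n^2}" using uv by (simp add: power2_eq_square)
  next
    fix k assume "k \<in> {..<n^2}"
    then have k: "k < n*n" by (simp add: power2_eq_square)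
    then have "n > 0" by (cases n) auto
    have "k div n < n" using k by (simp add: less_mult_imp_div_less)
    moreover have "k mod n < n" using \<open>n>0\<close> by simp
    moreover have "k = n*(k div n) + k mod n" by simp
    ultimately have "(k div n, k mod n) \<in> {..<n}\<times>{..<n}" "k = (\<lambda>(u,v). n*u+v) (k div n, k mod n)" by auto
    then show "k \<in> (\<lambda>(u,v). n*u+v) ` ({..<n}\<times>{..<n})" by (metis image_eqI)
  qed
  with inj show ?thesis by (simp add: bij_betw_def)
qed

lemma sq_sum:
  fixes A :: "nat \<Rightarrow> nat \<Rightarrow> nat"
  assumes rows: "\<forall>s<m. bij_betw (A s) {..<n} {..<n}"
    and col: "\<forall>x<n. (\<Sum>s<m. A s x) = c"
    and bp: "bij_betw p {..<n} {..<n}" and bq: "bij_betw q {..<n} {..<n}"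
  shows "(\<Sum>s<m. \<Sum>j<n. (n * A s (p j) + q j)^2)
     = n^2*m*(\<Sum>k<n. k^2) + 2*n*c*(\<Sum>k<n. k) + m*(\<Sum>k<(n::nat). k^2)"
proof -
  have h1: "(\<Sum>j<n. (A s (p j))^2) = (\<Sum>k<n. k^2)" if "s<m" for s
  proof -
    have "(\<Sum>j<n. (A s (p j))^2) = (\<Sum>k<n. (A s k)^2)"
      using sum.reindex_bij_betw[OF bp, of "\<lambda>k. (A s k)^2"] by simp
    also have "\<dots> = (\<Sum>k<n. k^2)"
      using sum.reindex_bij_betw[of "A s" "{..<n}" "{..<n}" "\<lambda>k. k^2"] rows that by simp
    finally show ?thesis .
  qed
  have h2: "(\<Sum>s<m. \<Sum>j<n. A s (p j) * q j) = c * (\<Sum>k<n. k)"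
  proof -
    have "(\<Sum>s<m. \<Sum>j<n. A s (p j) * q j) = (\<Sum>j<n. \<Sum>s<m. A s (p j) * q j)"
      by (rule sum.swap)
    also have "\<dots> = (\<Sum>j<n. c * q j)"
    proof (rule sum.cong[OF refl])
      fix j assume "j \<in> {..<n}"
      then have "p j < n" using bp by (auto simp: bij_betw_def)
      then show "(\<Sum>s<m. A s (p j) * q j) = c * q j"
        using col by (simp add: sum_distrib_right[symmetric])
    qed
    also have "\<dots> = c * (\<Sum>j<n. q j)" by (simp add: sum_distrib_left)
    also have "(\<Sum>j<n. q j) = (\<Sum>k<n. k)"
      using sum.reindex_bij_betw[OF bq, of "\<lambda>k. k"] by simp
    finally show ?thesis .
  qed
  have h3: "(\<Sum>j<n. (q j)^2) = (\<Sum>k<n. k^2)"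
    using sum.reindex_bij_betw[OF bq, of "\<lambda>k. k^2"] by simp
  have "(\<Sum>s<m. \<Sum>j<n. (n * A s (p j) + q j)^2)
     = (\<Sum>s<m. \<Sum>j<n. n^2 * (A s (p j))^2 + 2*n*(A s (p j) * q j) + (q j)^2)"
    by (intro sum.cong refl) (simp add: power2_sum power_mult_distrib algebra_simps)
  also have "\<dots> = n^2 * (\<Sum>s<m. \<Sum>j<n. (A s (p j))^2) + 2*n*(\<Sum>s<m. \<Sum>j<n. A s (p j) * q j)
       + (\<Sum>s<m. \<Sum>j<n. (q j)^2)"
    by (simp add: sum.distrib sum_distrib_left)
  also have "(\<Sum>s<m. \<Sum>j<n. (A s (p j))^2) = (\<Sum>s<m. \<Sum>k<n. k^2)"
    by (rule sum.cong[OF refl]) (simp add: h1)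
  finally show ?thesis using h2 h3 by (simp add: algebra_simps)
qed


lemma comp_bij:
  assumes "bij_betw h {0..<n} S" "bij_betw f S {0..<n}"
  shows "bij_betw (\<lambda>x. f (h x)) {..<n} {..<(n::nat)}"
  using bij_betw_trans[OF assms] by (simp add: o_def atLeast0LessThan)

lemma lin_sum:
  fixes a :: "nat \<Rightarrow> nat"
  assumes "bij_betw a {..<n} {..<n}" "bij_betw p {..<n} {..<n}" "bij_betw q {..<n} {..<n}"
  shows "(\<Sum>j<n. n * a (p j) + q j) = n * (\<Sum>k<n. k) + (\<Sum>k<(n::nat). k)"
proof -
  have "(\<Sum>j<n. a (p j)) = (\<Sum>k<n. a k)"
    using sum.reindex_bij_betw[OF assms(2), of a] by simp
  also have "\<dots> = (\<Sum>k<n. k)" using sum.reindex_bij_betw[OF assms(1), of "\<lambda>k. k"] by simp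
  finally have 1: "(\<Sum>j<n. a (p j)) = (\<Sum>k<n. k)" .
  have 2: "(\<Sum>j<n. q j) = (\<Sum>k<n. k)" using sum.reindex_bij_betw[OF assms(3), of "\<lambda>k. k"] by simp
  show ?thesis by (simp add: sum.distrib sum_distrib_left[symmetric] 1 2)
qed

theorem lemma3:
  fixes m n :: nat
  assumes "m \<ge> 1" and "n \<ge> 1"
    and "\<exists>A. kotzig_array m n A"
    and "\<exists>(S :: nat set) (T :: nat set) (L1 :: nat \<Rightarrow> nat \<Rightarrow> nat) (L2 :: nat \<Rightarrow> nat \<Rightarrow> nat).
           diagonal_latin_square n S L1 \<and> diagonal_latin_square n T L2 \<and> orthogonal n S T L1 L2"
  shows "\<exists>B. SCMS m n B"
proof -
  obtain A where KA: "kotzig_array m n A" using assms(3) by blast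
  obtain S T :: "nat set" and L1 L2 :: "nat \<Rightarrow> nat \<Rightarrow> nat" where
    d1: "diagonal_latin_square n S L1" and d2: "diagonal_latin_square n T L2"
    and orth: "orthogonal n S T L1 L2" using assms(4) by blast
  have fS: "finite S" "card S = n" and fT: "finite T" "card T = n"
    using d1 d2 by (auto simp: diagonal_latin_square_def latin_square_def)
  obtain f where bf: "bij_betw f S {0..<n}" using ex_bij_betw_finite_nat[OF fS(1)] fS(2) by auto
  obtain g where bg: "bij_betw g T {0..<n}" using ex_bij_betw_finite_nat[OF fT(1)] fT(2) by auto
  define P where "P i j = f (L1 i j)" for i j
  define Q where "Q i j = g (L2 i j)" for i j
  have rowP: "bij_betw (\<lambda>j. P i j) {..<n} {..<n}" if "i<n" for i
    unfolding P_def using d1 that by (intro comp_bij[OF _ bf]) (auto simp: diagonal_latin_square_def latin_square_def)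
  have colP: "bij_betw (\<lambda>i. P i j) {..<n} {..<n}" if "j<n" for j
    unfolding P_def using d1 that by (intro comp_bij[OF _ bf]) (auto simp: diagonal_latin_square_def latin_square_def)
  have diagP: "bij_betw (\<lambda>i. P i i) {..<n} {..<n}"
    unfolding P_def using d1 by (intro comp_bij[OF _ bf]) (auto simp: diagonal_latin_square_def latin_square_def)
  have adiagP: "bij_betw (\<lambda>i. P i (n - 1 - i)) {..<n} {..<n}"
    unfolding P_def using d1 by (intro comp_bij[OF _ bf]) (auto simp: diagonal_latin_square_def latin_square_def)
  have rowQ: "bij_betw (\<lambda>j. Q i j) {..<n} {..<n}" if "i<n" for i
    unfolding Q_def using d2 that by (intro comp_bij[OF _ bg]) (auto simp: diagonal_latin_square_def latin_square_def)
  have colQ: "bij_betw (\<lambda>i. Q i j) {..<n} {..<n}" if "j<n" for j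
    unfolding Q_def using d2 that by (intro comp_bij[OF _ bg]) (auto simp: diagonal_latin_square_def latin_square_def)
  have diagQ: "bij_betw (\<lambda>i. Q i i) {..<n} {..<n}"
    unfolding Q_def using d2 by (intro comp_bij[OF _ bg]) (auto simp: diagonal_latin_square_def latin_square_def)
  have adiagQ: "bij_betw (\<lambda>i. Q i (n - 1 - i)) {..<n} {..<n}"
    unfolding Q_def using d2 by (intro comp_bij[OF _ bg]) (auto simp: diagonal_latin_square_def latin_square_def)
  have orthPQ: "bij_betw (\<lambda>(i,j). (P i j, Q i j)) ({..<n}\<times>{..<n}) ({..<n}\<times>{..<n})"
  proof -
    have "bij_betw (map_prod f g \<circ> (\<lambda>(i, j). (L1 i j, L2 i j))) ({0..<n}\<times>{0..<n}) ({0..<n}\<times>{0..<n})"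
      using bij_betw_trans[OF orth[unfolded orthogonal_def] bij_betw_map_prod[OF bf bg]] .
    moreover have "map_prod f g \<circ> (\<lambda>(i, j). (L1 i j, L2 i j)) = (\<lambda>(i,j). (P i j, Q i j))"
      by (auto simp: fun_eq_iff P_def Q_def)
    ultimately show ?thesis by (simp add: atLeast0LessThan)
  qed
  have Arows: "bij_betw (A s) {..<n} {..<n}" if "s<m" for s
    using KA that by (simp add: kotzig_array_def atLeast0LessThan)
  define c where "c = (\<Sum>s<m. A s 0)"
  have col: "\<forall>x<n. (\<Sum>s<m. A s x) = c"
  proof (intro allI impI)
    fix x assume "x<n"
    moreover have "0<n" using assms(2) by simp
    ultimately show "(\<Sum>s<m. A s x) = c" using KA unfolding kotzig_array_def c_def by blast
  qed
  define B where "B s i j = n * A s (P i j) + Q i j" for s i j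
  have Bbij: "bij_betw (\<lambda>(i,j). B s i j) ({..<n}\<times>{..<n}) {..<n^2}" if "s<m" for s
  proof -
    have "bij_betw ((\<lambda>(u,v). n*u+v) \<circ> map_prod (A s) id \<circ> (\<lambda>(i,j). (P i j, Q i j))) ({..<n}\<times>{..<n}) {..<n^2}"
      by (rule bij_betw_trans[OF orthPQ bij_betw_trans[OF bij_betw_map_prod[OF Arows[OF that] bij_betw_id] pair_bij]])
    moreover have "(\<lambda>(u,v). n*u+v) \<circ> map_prod (A s) id \<circ> (\<lambda>(i,j). (P i j, Q i j)) = (\<lambda>(i,j). B s i j)"
      by (auto simp: fun_eq_iff B_def)
    ultimately show ?thesis by simp
  qed
  have magic: "magic_square n (B s)" if "s<m" for s
  proof -
    let ?c = "n * (\<Sum>k<n. k) + (\<Sum>k<(n::nat). k)"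
    have "\<forall>i<n. (\<Sum>j<n. B s i j) = ?c"
      unfolding B_def using lin_sum[OF Arows[OF that] rowP rowQ] by blast
    moreover have "\<forall>j<n. (\<Sum>i<n. B s i j) = ?c"
      unfolding B_def using lin_sum[OF Arows[OF that] colP colQ] by blast
    moreover have "(\<Sum>i<n. B s i i) = ?c"
      unfolding B_def using lin_sum[OF Arows[OF that] diagP diagQ] by blast
    moreover have "(\<Sum>i<n. B s i (n - 1 - i)) = ?c"
      unfolding B_def using lin_sum[OF Arows[OF that] adiagP adiagQ] by blast
    ultimately show ?thesis using Bbij[OF that] unfolding magic_square_def
      by (simp add: atLeast0LessThan)
  qed
  define F where "F = n^2*m*(\<Sum>k<n. k^2) + 2*n*c*(\<Sum>k<n. k) + m*(\<Sum>k<(n::nat). k^2)"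
  have rowsq: "(\<Sum>s<m. \<Sum>j<n. (B s i j)^2) = F" if "i<n" for i
    unfolding B_def F_def by (rule sq_sum[OF _ col rowP[OF that] rowQ[OF that]]) (simp add: Arows)
  have colsq: "(\<Sum>s<m. \<Sum>i<n. (B s i j)^2) = F" if "j<n" for j
    unfolding B_def F_def by (rule sq_sum[OF _ col colP[OF that] colQ[OF that]]) (simp add: Arows)
  have diagsq: "(\<Sum>s<m. \<Sum>i<n. (B s i i)^2) = F"
    unfolding B_def F_def by (rule sq_sum[OF _ col diagP diagQ]) (simp add: Arows)
  have adiagsq: "(\<Sum>s<m. \<Sum>i<n. (B s i (n - 1 - i))^2) = F"
    unfolding B_def F_def by (rule sq_sum[OF _ col adiagP adiagQ]) (simp add: Arows)
  have tot: "n * F = m * (\<Sum>k<n^2. k^2)"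
  proof -
    have "n * F = (\<Sum>i<n. \<Sum>s<m. \<Sum>j<n. (B s i j)^2)" using rowsq by simp
    also have "\<dots> = (\<Sum>s<m. \<Sum>i<n. \<Sum>j<n. (B s i j)^2)" by (rule sum.swap)
    also have "\<dots> = (\<Sum>s<m. \<Sum>k<n^2. k^2)"
    proof (rule sum.cong[OF refl])
      fix s assume "s \<in> {..<m}"
      then have s: "s<m" by simp
      have "(\<Sum>i<n. \<Sum>j<n. (B s i j)^2) = (\<Sum>(i,j)\<in>{..<n}\<times>{..<n}. (B s i j)^2)"
        by (rule sum.cartesian_product)
      also have "\<dots> = (\<Sum>x\<in>{..<n}\<times>{..<n}. ((\<lambda>(i,j). B s i j) x)^2)"
        by (rule sum.cong) auto
      also have "\<dots> = (\<Sum>k<n^2. k^2)"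
        by (rule sum.reindex_bij_betw[OF Bbij[OF s], of "\<lambda>k. k^2"])
      finally show "(\<Sum>i<n. \<Sum>j<n. (B s i j)^2) = (\<Sum>k<n^2. k^2)" .
    qed
    also have "\<dots> = m * (\<Sum>k<n^2. k^2)" by simp
    finally show ?thesis .
  qed
  have FS: "real F = real m * S2 n"
  proof -
    have "real m * S2 n = real (m * (\<Sum>k<n^2. k^2)) / real n"
      unfolding S2_def by (simp add: of_nat_sum)
    also have "\<dots> = real (n * F) / real n" by (simp only: tot)
    also have "\<dots> = real F" using assms(2) by simp
    finally show ?thesis by simp
  qed
  have "SCMS m n B"
    unfolding SCMS_def
  proof (intro conjI allI impI)
    show "magic_square n (B s)" if "s<m" for s using magic that by blast
    show "(\<Sum>s<m. \<Sum>j<n. real ((B s i j)^2)) = real m * S2 n" if "i<n" for i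
      using rowsq[OF that] FS by (simp only: of_nat_sum[symmetric])
    show "(\<Sum>s<m. \<Sum>i<n. real ((B s i j)^2)) = real m * S2 n" if "j<n" for j
      using colsq[OF that] FS by (simp only: of_nat_sum[symmetric])
    show "(\<Sum>s<m. \<Sum>i<n. real ((B s i i)^2)) = real m * S2 n"
      using diagsq FS by (simp only: of_nat_sum[symmetric])
    show "(\<Sum>s<m. \<Sum>i<n. real ((B s i (n - 1 - i))^2)) = real m * S2 n"
      using adiagsq FS by (simp only: of_nat_sum[symmetric])
  qed
  then show ?thesis by blast
qed

end
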